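(* Let $G$ be a quiver without multiple connections with $n \geq 1$ vertices, let $\lambda_1 \leq \cdots \leq \lambda_n$ be the eigenvalues of its Kirchhoff matrix $K$ (with multiplicity), and let $d_1 \leq \cdots \leq d_n$ be its vertex degrees in increasing order. Then $\lambda_k \geq d_k - (n-k)$ for all $1 \leq k \leq n$.
   Context: A quiver $G=(V,E)$ consists of a finite vertex set $V=\{1,\dots,n\}$ and a finite list (multiset) $E$ of pairs $(v,w)\in V\times V$; repeated edges and self-loops $(v,v)$ are allowed, and orientation of edges is irrelevant. "Without multiple connections" means that for any two distinct vertices $i\neq j$ there is at most one entry of $E$ equal to $(i,j)$ or $(j,i)$; any number of loops at a vertex is still allowed. The adjacency matrix $A$ is the symmetric $n\times n$ matrix with zero diagonal whose entry $A_{ij}$ ($i\neq j$) is the number of entries of $E$ equal to $(i,j)$ or $(j,i)$. The degree $d(i)$ of vertex $i$ is the number of entries $(v,w)$ of $E$ (counted with multiplicity) with $v=i$ or $w=i$; a loop at $i$ contributes $1$. $B$ is the diagonal degree matrix and the Kirchhoff matrix is $K=B-A$. *)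

theory Defs
  imports "Jordan_Normal_Form.Char_Poly"
begin

text \<open>A quiver on vertex set {1..n} is given by a finite list (multiset) E of vertex pairs.\<close>

definition quiver :: "nat \<Rightarrow> (nat \<times> nat) list \<Rightarrow> bool" where
  "quiver n E \<longleftrightarrow> (\<forall>(v,w) \<in> set E. v \<in> {1..n} \<and> w \<in> {1..n})"

definition edge_count :: "(nat \<times> nat) list \<Rightarrow> nat \<Rightarrow> nat \<Rightarrow> nat" where
  "edge_count E i j = length (filter (\<lambda>e. e = (i,j) \<or> e = (j,i)) E)"

definition no_multiple_connections :: "nat \<Rightarrow> (nat \<times> nat) list \<Rightarrow> bool" where
  "no_multiple_connections n E \<longleftrightarrow>
     (\<forall>i \<in> {1..n}. \<forall>j \<in> {1..n}. i \<noteq> j \<longrightarrow> edge_count E i j \<le> 1)"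

text \<open>Degree: number of entries (v,w) with v = i or w = i; a loop counts once.\<close>
definition degree :: "(nat \<times> nat) list \<Rightarrow> nat \<Rightarrow> nat" where
  "degree E i = length (filter (\<lambda>(v,w). v = i \<or> w = i) E)"

text \<open>Adjacency matrix (zero diagonal), degree matrix, Kirchhoff matrix K = B - A.
  Matrix index a (0-based) corresponds to vertex a+1.\<close>
definition adjacency_matrix :: "nat \<Rightarrow> (nat \<times> nat) list \<Rightarrow> real mat" where
  "adjacency_matrix n E = mat n n (\<lambda>(a,b). if a = b then 0 else real (edge_count E (a+1) (b+1)))"

definition degree_matrix :: "nat \<Rightarrow> (nat \<times> nat) list \<Rightarrow> real mat" where
  "degree_matrix n E = mat n n (\<lambda>(a,b). if a = b then real (degree E (a+1)) else 0)"

definition kirchhoff_matrix :: "nat \<Rightarrow> (nat \<times> nat) list \<Rightarrow> real mat" where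
  "kirchhoff_matrix n E = degree_matrix n E - adjacency_matrix n E"

definition eigenvalue_list :: "real mat \<Rightarrow> real list \<Rightarrow> bool" where
  "eigenvalue_list K ls \<longleftrightarrow> sorted ls \<and> char_poly K = (\<Prod>a \<leftarrow> ls. [:- a, 1:])"

definition sorted_degrees :: "nat \<Rightarrow> (nat \<times> nat) list \<Rightarrow> nat list" where
  "sorted_degrees n E = sort (map (degree E) [1..<n+1])"

end

theory Submission imports Defs "Jordan_Normal_Form.Schur_Decomposition" begin

lemma conj_real_vec[simp]: "conjugate (v :: real vec) = v"
  by (rule eq_vecI) auto

lemma real_schur:
  fixes A :: "real mat"
  assumes "A \<in> carrier_mat n n" and "char_poly A = (\<Prod>e\<leftarrow>es. [:- e, 1:])"
  shows "\<exists>P. P \<in> carrier_mat n n \<and> transpose_mat P * P = 1\<^sub>m n \<and>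
     upper_triangular (transpose_mat P * A * P) \<and> diag_mat (transpose_mat P * A * P) = es"
  using assms
proof (induct es arbitrary: n A)
  case Nil
  then have "n = 0" using degree_monic_char_poly[of A n] by auto
  then show ?case using Nil by (intro exI[of _ "1\<^sub>m 0"]) (auto simp: diag_mat_def upper_triangular_def)
next
  case (Cons e es n A)
  let ?n1 = "n - 1"
  from Cons have A: "A \<in> carrier_mat n n" by auto
  have cp: "char_poly A = [: -e, 1 :] * (\<Prod>e \<leftarrow> es. [:- e, 1:])" using Cons(3) by simp
  have mon: "monic (\<Prod>e\<leftarrow> es. [:- e, 1:])" by (rule monic_prod_list, auto)
  have deg: "Polynomial.degree (char_poly A) = Suc (Polynomial.degree (\<Prod>e\<leftarrow> es. [:- e, 1:]))" unfolding cp
    by (subst degree_mult_eq, insert mon, auto)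
  with degree_monic_char_poly[OF A] have n: "n \<noteq> 0" by auto
  have ev: "eigenvalue A e" 
    unfolding eigenvalue_root_char_poly[OF A] cp by simp
  define v where "v = find_eigenvector A e"
  from find_eigenvector[OF A ev] have "eigenvector A v e" unfolding v_def .
  then have v[simp]: "v \<in> carrier_vec n" and v0: "v \<noteq> 0\<^sub>v n" and Av: "A *\<^sub>v v = e \<cdot>\<^sub>v v"
    using A unfolding eigenvector_def by auto
  interpret cof_vec_space n "TYPE(real)" .
  define b where "b = basis_completion v"
  from basis_completion[OF v v0, folded b_def]
  have dist_b: "distinct b" 
    and indep: "\<not> lin_dep (set b)" and b: "set b \<subseteq> carrier_vec n" and hdb: "hd b = v" 
    and len_b: "length b = n" by auto
  from hdb len_b n obtain vs where bv: "b = v # vs" by (cases b, auto)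
  define ws where "ws = gram_schmidt n b"
  from gram_schmidt_result[OF b dist_b indep refl, folded ws_def]
  have ws: "set ws \<subseteq> carrier_vec n" "corthogonal ws" "length ws = n" 
    by (auto simp: len_b)
  from gram_schmidt_hd[OF v, of vs, folded bv] have hdws: "hd ws = v" unfolding ws_def .
  have ws0: "ws ! 0 = v" using hdws n ws(3) by (cases ws, auto)
  define us where "us = map (\<lambda>w. (1 / sqrt (w \<bullet> w)) \<cdot>\<^sub>v w) ws"
  have us_len: "length us = n" using ws unfolding us_def by simp
  have us_car: "\<And>i. i < n \<Longrightarrow> us ! i \<in> carrier_vec n" using ws unfolding us_def by auto
  have ws_car: "\<And>i. i < n \<Longrightarrow> ws ! i \<in> carrier_vec n" using ws by auto
  have ws_orth: "\<And>i j. i < n \<Longrightarrow> j < n \<Longrightarrow> ws ! i \<bullet> ws ! j = 0 \<longleftrightarrow> i \<noteq> j"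
    using ws(2,3) unfolding corthogonal_def by auto
  have ws_pos: "\<And>i. i < n \<Longrightarrow> ws ! i \<bullet> ws ! i > 0"
  proof -
    fix i assume i: "i < n"
    have "ws ! i \<bullet> ws ! i \<ge> 0" unfolding scalar_prod_def by (auto intro: sum_nonneg)
    with ws_orth[OF i i] show "ws ! i \<bullet> ws ! i > 0" by auto
  qed
  have us_orth: "\<And>i j. i < n \<Longrightarrow> j < n \<Longrightarrow> us ! i \<bullet> us ! j = (if i = j then 1 else 0)"
  proof -
    fix i j assume i: "i < n" and j: "j < n"
    have "us ! i \<bullet> us ! j = (1 / sqrt (ws!i \<bullet> ws!i)) * (1 / sqrt (ws!j \<bullet> ws!j)) * (ws ! i \<bullet> ws ! j)"
      unfolding us_def using i j ws ws_car[OF i] ws_car[OF j] by simp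
    then show "us ! i \<bullet> us ! j = (if i = j then 1 else 0)"
      using ws_orth[OF i j] ws_pos[OF i]
      by (auto simp: real_sqrt_mult[symmetric])
  qed
  define W where "W = mat_of_cols n us"
  have W: "W \<in> carrier_mat n n" unfolding W_def using us_len by auto
  have colW: "\<And>j. j < n \<Longrightarrow> col W j = us ! j" unfolding W_def using us_len us_car by simp
  have WTW: "transpose_mat W * W = 1\<^sub>m n"
    by (rule eq_matI, insert W colW us_orth, auto)
  have WWT: "W * transpose_mat W = 1\<^sub>m n"
    using mat_mult_left_right_inverse[OF _ W WTW] W by auto
  define W' where "W' = transpose_mat W"
  have W': "W' \<in> carrier_mat n n" unfolding W'_def using W by auto
  define A' where "A' = W' * A * W"
  have A': "A' \<in> carrier_mat n n" using W W' A unfolding A'_def by auto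
  have A'A_wit: "similar_mat_wit A' A W' W"
    by (rule similar_mat_witI[of _ _ n], insert W W' A A' WTW WWT, auto simp: A'_def W'_def)
  hence A'A: "similar_mat A' A" unfolding similar_mat_def by blast
  have u0: "us ! 0 = (1 / sqrt (v \<bullet> v)) \<cdot>\<^sub>v v" unfolding us_def using ws0 ws(3) n by simp
  have Au0: "A *\<^sub>v (us ! 0) = e \<cdot>\<^sub>v (us ! 0)"
    unfolding u0 using A v Av by (simp add: mult_mat_vec smult_smult_assoc mult.commute)
  have "col A' 0 = W' *\<^sub>v (A *\<^sub>v col W 0)"
  proof -
    have "col A' 0 = (W' * A) *\<^sub>v col W 0"
      unfolding A'_def by (rule col_mult2) (use W W' A n in auto)
    also have "\<dots> = W' *\<^sub>v (A *\<^sub>v col W 0)"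
      by (rule assoc_mult_mat_vec) (use W W' A n in auto)
    finally show ?thesis .
  qed
  also have "\<dots> = e \<cdot>\<^sub>v (W' *\<^sub>v col W 0)" using colW[of 0] n Au0 W' us_car[of 0]
    by (simp add: mult_mat_vec)
  also have "W' *\<^sub>v col W 0 = col (W' * W) 0" by (rule col_mult2[symmetric]) (use W W' n in auto)
  also have "\<dots> = unit_vec n 0" using WTW n unfolding W'_def by simp
  finally have col0: "col A' 0 = vec n (\<lambda> i. if i = 0 then e else 0)"
    by (auto simp: unit_vec_def)
  from A' n have dimA': "dim_row A' = 1 + ?n1" "dim_col A' = 1 + ?n1" by auto
  obtain A1 A2 A0 A3 where splitA': "split_block A' 1 1 = (A1,A2,A0,A3)"
    by (cases "split_block A' 1 1", auto)
  from split_block[OF splitA' dimA'] have A2: "A2 \<in> carrier_mat 1 ?n1"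
    and A3: "A3 \<in> carrier_mat ?n1 ?n1" 
    and A'block: "A' = four_block_mat A1 A2 A0 A3" by auto
  have A1id: "A1 = mat 1 1 (\<lambda> _. e)"
    using splitA'[unfolded split_block_def Let_def] arg_cong[OF col0, of "\<lambda> v. v $ 0"] A' n
    by (auto simp: col_def)
  have A1: "A1 \<in> carrier_mat 1 1" unfolding A1id by auto
  {
    fix i
    assume "i < ?n1"
    with arg_cong[OF col0, of "\<lambda> v. v $ Suc i"] A'
    have "A' $$ (Suc i, 0) = 0" by auto
  } note A'0 = this
  have A0id: "A0 = 0\<^sub>m ?n1 1"
    using splitA'[unfolded split_block_def Let_def] A'0 A' by auto
  from cp char_poly_similar[OF A'A]
  have cp: "char_poly A' = [: -e,1 :] * (\<Prod> e \<leftarrow> es. [:- e, 1:])" by simp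
  also have "char_poly A' = char_poly A1 * char_poly A3" 
    unfolding A'block A0id
    by (rule char_poly_four_block_zeros_col[OF A1 A2 A3])
  also have "char_poly A1 = [: -e,1 :]"
    by (simp add: A1id char_poly_defs det_def sign_def)
  finally have cp: "char_poly A3 = (\<Prod> e \<leftarrow> es. [:- e, 1:])"
    by (metis mult_cancel_left pCons_eq_0_iff zero_neq_one)
  from Cons(1)[OF A3 cp] obtain P' where P': "P' \<in> carrier_mat ?n1 ?n1"
    and P'TP': "transpose_mat P' * P' = 1\<^sub>m ?n1"
    and ut': "upper_triangular (transpose_mat P' * A3 * P')"
    and diag': "diag_mat (transpose_mat P' * A3 * P') = es" by blast
  have n1: "1 + ?n1 = n" using n by simp
  define P'' where "P'' = four_block_mat (1\<^sub>m 1) (0\<^sub>m 1 ?n1) (0\<^sub>m ?n1 1) P'"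
  have P'': "P'' \<in> carrier_mat n n" unfolding P''_def using P' n1 by auto
  have P''T: "transpose_mat P'' = four_block_mat (1\<^sub>m 1) (0\<^sub>m 1 ?n1) (0\<^sub>m ?n1 1) (transpose_mat P')"
    unfolding P''_def using P' by (simp add: transpose_four_block_mat[of _ 1 1 _ ?n1 _ ?n1])
  define P where "P = W * P''"
  have P: "P \<in> carrier_mat n n" unfolding P_def using W P'' by auto
  have PT: "transpose_mat (W * P'') = transpose_mat P'' * W'"
    unfolding W'_def using transpose_mult[OF W P''] .
  have "transpose_mat P * P = transpose_mat P'' * (W' * W) * P''"
    unfolding P_def PT using W W' P'' by (simp add: assoc_mult_mat[of _ n n _ n _ n])
  also have "\<dots> = transpose_mat P'' * P''" using WTW P'' unfolding W'_def by simp
  also have "\<dots> = 1\<^sub>m n" unfolding P''T unfolding P''_def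
    by (subst mult_four_block_mat[of _ 1 1 _ ?n1 _ ?n1 _ _ 1 _ ?n1], insert P' P'TP' n1, auto)
  finally have PTP: "transpose_mat P * P = 1\<^sub>m n" .
  have "transpose_mat P * A * P = transpose_mat P'' * A' * P''"
    unfolding P_def PT A'_def using W W' P'' A by (simp add: assoc_mult_mat[of _ n n _ n _ n])
  also have "\<dots> = four_block_mat A1 (A2 * P') (0\<^sub>m ?n1 1) (transpose_mat P' * A3 * P')"
    unfolding P''T unfolding P''_def A'block A0id
    apply (subst mult_four_block_mat[of _ 1 1 _ ?n1 _ ?n1 _ _ 1 _ ?n1], insert P' A1 A2 A3, auto)
    apply (subst mult_four_block_mat[of _ 1 1 _ ?n1 _ ?n1 _ _ 1 _ ?n1], insert P' A1 A2 A3, auto)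
    done
  finally have D: "transpose_mat P * A * P = four_block_mat A1 (A2 * P') (0\<^sub>m ?n1 1) (transpose_mat P' * A3 * P')" .
  have ut1: "upper_triangular A1" unfolding A1id by auto
  have B': "transpose_mat P' * A3 * P' \<in> carrier_mat ?n1 ?n1" using P' A3 by auto
  have ut: "upper_triangular (transpose_mat P * A * P)" unfolding D
    by (intro upper_triangular_four_block[OF A1 B' ut1 ut'])
  from A1id have diagA1: "diag_mat A1 = [e]" unfolding diag_mat_def by auto
  have diag: "diag_mat (transpose_mat P * A * P) = e # es"
    unfolding D diag_four_block_mat[OF A1 B'] diagA1 diag' by simp
  show ?case using P PTP ut diag by blast
qed

lemma quad_form:
  fixes A :: "real mat"
  assumes "A \<in> carrier_mat n n" "x \<in> carrier_vec n"
  shows "x \<bullet> (A *\<^sub>v x) = (\<Sum>i\<in>{0..<n}. \<Sum>j\<in>{0..<n}. x$i * A$$(i,j) * x$j)"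
  using assms by (simp add: scalar_prod_def row_def sum_distrib_left mult.assoc)

lemma sum_pairs:
  fixes g :: "nat \<Rightarrow> real"
  assumes "finite T"
  shows "(\<Sum>i\<in>T. \<Sum>j\<in>T. if i \<noteq> j then (g i + g j)/2 else 0) = real (card T - 1) * (\<Sum>i\<in>T. g i)"
proof -
  have 1: "(\<Sum>i\<in>T. \<Sum>j\<in>T. if i \<noteq> j then g i else 0) = real (card T - 1) * (\<Sum>i\<in>T. g i)"
  proof -
    have "(\<Sum>i\<in>T. \<Sum>j\<in>T. if i \<noteq> j then g i else 0) = (\<Sum>i\<in>T. real (card T - 1) * g i)"
    proof (rule sum.cong[OF refl])
      fix i assume i: "i \<in> T"
      have "(\<Sum>j\<in>T. if i \<noteq> j then g i else 0) = (\<Sum>j\<in>T - {i}. g i)"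
      proof -
        have e: "T \<inter> {j. i \<noteq> j} = T - {i}" by auto
        show ?thesis using assms by (simp add: sum.If_cases e)
      qed
      also have "\<dots> = real (card T - 1) * g i" using i assms by simp
      finally show "(\<Sum>j\<in>T. if i \<noteq> j then g i else 0) = real (card T - 1) * g i" .
    qed
    then show ?thesis by (simp add: sum_distrib_left)
  qed
  have 2: "(\<Sum>i\<in>T. \<Sum>j\<in>T. if i \<noteq> j then g j else 0) = (\<Sum>j\<in>T. \<Sum>i\<in>T. if j \<noteq> i then g j else 0)"
    by (subst sum.swap) (intro sum.cong refl, auto)
  have "(\<Sum>i\<in>T. \<Sum>j\<in>T. if i \<noteq> j then (g i + g j)/2 else 0)
     = (\<Sum>i\<in>T. \<Sum>j\<in>T. (if i \<noteq> j then g i else 0) / 2 + (if i \<noteq> j then g j else 0) / 2)"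
    by (intro sum.cong refl) auto
  also have "\<dots> = (\<Sum>i\<in>T. \<Sum>j\<in>T. if i \<noteq> j then g i else 0) / 2 + (\<Sum>i\<in>T. \<Sum>j\<in>T. if i \<noteq> j then g j else 0) / 2"
    by (simp add: sum.distrib sum_divide_distrib)
  finally show ?thesis unfolding 2 1 by simp
qed


lemma edge_count_sym: "edge_count E i j = edge_count E j i"
  unfolding edge_count_def by (metis disj_commute)

lemma kirchhoff_carrier: "kirchhoff_matrix n E \<in> carrier_mat n n"
  unfolding kirchhoff_matrix_def degree_matrix_def adjacency_matrix_def by auto

lemma kirchhoff_index:
  assumes "i < n" "j < n"
  shows "kirchhoff_matrix n E $$ (i,j) =
    (if i = j then real (degree E (i+1)) else - real (edge_count E (i+1) (j+1)))"
  using assms unfolding kirchhoff_matrix_def degree_matrix_def adjacency_matrix_def by auto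

lemma kirchhoff_sym: "transpose_mat (kirchhoff_matrix n E) = kirchhoff_matrix n E"
  by (rule eq_matI, insert kirchhoff_carrier[of n E], auto simp: kirchhoff_index edge_count_sym)

lemma quad_bound:
  fixes x :: "real vec"
  assumes nm: "no_multiple_connections n E" and T: "T \<subseteq> {0..<n}"
    and dv: "\<forall>i\<in>T. dv \<le> degree E (i+1)"
    and x: "x \<in> carrier_vec n" and x0: "\<forall>j<n. j \<notin> T \<longrightarrow> x$j = 0"
  shows "x \<bullet> (kirchhoff_matrix n E *\<^sub>v x) \<ge> (real dv - real (card T - 1)) * (x \<bullet> x)"
proof -
  define g where "g i = x$i * x$i" for i
  define ec where "ec i j = real (edge_count E (i+1) (j+1))" for i j
  have fT: "finite T" using T finite_subset by blast
  have xx: "x \<bullet> x = (\<Sum>i\<in>T. g i)"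
  proof -
    have "x \<bullet> x = (\<Sum>i\<in>{0..<n}. g i)" using x unfolding scalar_prod_def g_def by simp
    also have "\<dots> = (\<Sum>i\<in>T. g i)"
      by (rule sum.mono_neutral_right, insert T x0, auto simp: g_def)
    finally show ?thesis .
  qed
  have q: "x \<bullet> (kirchhoff_matrix n E *\<^sub>v x) =
     (\<Sum>i\<in>{0..<n}. \<Sum>j\<in>{0..<n}. x$i * kirchhoff_matrix n E $$ (i,j) * x$j)"
    by (rule quad_form[OF kirchhoff_carrier x])
  also have "\<dots> = (\<Sum>i\<in>T. \<Sum>j\<in>T. x$i * kirchhoff_matrix n E $$ (i,j) * x$j)"
  proof -
    have "(\<Sum>i\<in>{0..<n}. \<Sum>j\<in>{0..<n}. x$i * kirchhoff_matrix n E $$ (i,j) * x$j)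
       = (\<Sum>i\<in>T. \<Sum>j\<in>{0..<n}. x$i * kirchhoff_matrix n E $$ (i,j) * x$j)"
      by (rule sum.mono_neutral_right, insert T x0, auto)
    also have "\<dots> = (\<Sum>i\<in>T. \<Sum>j\<in>T. x$i * kirchhoff_matrix n E $$ (i,j) * x$j)"
      by (intro sum.cong refl sum.mono_neutral_right, insert T x0, auto)
    finally show ?thesis .
  qed
  also have "\<dots> = (\<Sum>i\<in>T. \<Sum>j\<in>T. (if i = j then real (degree E (i+1)) * g i else 0)
        - (if i \<noteq> j then ec i j * x$i * x$j else 0))"
  proof -
    have Tn: "\<And>i. i \<in> T \<Longrightarrow> i < n" using T by auto
    show ?thesis by (intro sum.cong refl, auto simp: kirchhoff_index Tn g_def ec_def)
  qed
  also have "\<dots> = (\<Sum>i\<in>T. real (degree E (i+1)) * g i)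
        - (\<Sum>i\<in>T. \<Sum>j\<in>T. if i \<noteq> j then ec i j * x$i * x$j else 0)"
    using fT by (simp add: sum_subtractf)
  finally have eq: "x \<bullet> (kirchhoff_matrix n E *\<^sub>v x) = \<dots>" .
  have 1: "(\<Sum>i\<in>T. real (degree E (i+1)) * g i) \<ge> (\<Sum>i\<in>T. real dv * g i)"
    by (rule sum_mono, insert dv, auto simp: g_def intro!: mult_right_mono)
  have 2: "(\<Sum>i\<in>T. \<Sum>j\<in>T. if i \<noteq> j then ec i j * x$i * x$j else 0)
     \<le> (\<Sum>i\<in>T. \<Sum>j\<in>T. if i \<noteq> j then (g i + g j)/2 else 0)"
  proof (intro sum_mono)
    fix i j assume i: "i \<in> T" and j: "j \<in> T"
    show "(if i \<noteq> j then ec i j * x$i * x$j else 0) \<le> (if i \<noteq> j then (g i + g j)/2 else 0)"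
    proof (cases "i = j")
      case False
      have "i < n" "j < n" using i j T by auto
      then have "edge_count E (i+1) (j+1) \<le> 1"
        using nm False unfolding no_multiple_connections_def by auto
      then have e1: "ec i j \<le> 1" "ec i j \<ge> 0" unfolding ec_def by auto
      have p: "x$i * x$j \<le> (g i + g j)/2" unfolding g_def
        using sum_squares_bound[of "x$i" "x$j"] by (simp add: power2_eq_square)
      have q0: "(g i + g j)/2 \<ge> 0" unfolding g_def by simp
      have "ec i j * (x$i * x$j) \<le> ec i j * ((g i + g j)/2)"
        using p e1 by (intro mult_left_mono) auto
      also have "\<dots> \<le> (g i + g j)/2" using e1 q0 by (simp add: mult_left_le_one_le)
      finally show ?thesis using False by (simp add: mult.assoc)
    qed simp
  qed
  have 3: "(\<Sum>i\<in>T. \<Sum>j\<in>T. if i \<noteq> j then (g i + g j)/2 else 0) = real (card T - 1) * (\<Sum>i\<in>T. g i)"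
    by (rule sum_pairs[OF fT])
  show ?thesis unfolding eq xx using 1 2 3 by (simp add: sum_distrib_left[symmetric] left_diff_distrib)
qed


lemma length_filter_sort: "length (filter P (sort xs)) = length (filter P xs)"
  by (metis mset_filter mset_sort size_mset)

lemma sorted_degrees_count:
  assumes k: "1 \<le> k" "k \<le> n"
  shows "n - k + 1 \<le> card {i\<in>{0..<n}. sorted_degrees n E ! (k-1) \<le> degree E (i+1)}"
proof -
  define ds where "ds = map (degree E) [1..<n+1]"
  define s where "s = sort ds"
  define v where "v = s ! (k-1)"
  have lds: "length ds = n" and ls: "length s = n" unfolding ds_def s_def by auto
  have dsi: "\<And>i. i < n \<Longrightarrow> ds ! i = degree E (i+1)" unfolding ds_def
    by (subst nth_map) (auto simp del: upt_Suc)
  have "card {i. i < n \<and> ds ! i < v} = length (filter (\<lambda>d. d < v) ds)"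
    by (simp add: length_filter_conv_card lds)
  also have "\<dots> = length (filter (\<lambda>d. d < v) s)" unfolding s_def by (simp add: length_filter_sort)
  also have "\<dots> = card {i. i < n \<and> s ! i < v}" by (simp add: length_filter_conv_card ls)
  also have "\<dots> \<le> card {0..<k-1}"
  proof (rule card_mono)
    show "{i. i < n \<and> s ! i < v} \<subseteq> {0..<k-1}"
    proof
      fix i assume i: "i \<in> {i. i < n \<and> s ! i < v}"
      show "i \<in> {0..<k-1}"
      proof (rule ccontr)
        assume "i \<notin> {0..<k-1}"
        then have "k - 1 \<le> i" by auto
        then have "s ! (k-1) \<le> s ! i" using i ls unfolding s_def
          by (intro sorted_nth_mono) auto
        then show False using i unfolding v_def by auto
      qed
    qed
  qed simp
  finally have c1: "card {i. i < n \<and> ds ! i < v} \<le> k - 1" by simp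
  have eq: "{i\<in>{0..<n}. v \<le> degree E (i+1)} = {0..<n} - {i. i < n \<and> ds ! i < v}"
    using dsi by auto
  have "card {i\<in>{0..<n}. v \<le> degree E (i+1)} = n - card {i. i < n \<and> ds ! i < v}"
    unfolding eq by (subst card_Diff_subset) auto
  then have "n - k + 1 \<le> card {i\<in>{0..<n}. v \<le> degree E (i+1)}" using c1 k by linarith
  then show ?thesis unfolding v_def s_def ds_def sorted_degrees_def by simp
qed

lemma degree_prod_linear: "Polynomial.degree (\<Prod>a\<leftarrow>ls. [:- (a::real), 1:]) = length ls"
proof (induct ls)
  case (Cons a ls)
  have mon: "monic (\<Prod>e\<leftarrow> ls. [:- e, 1:])" by (rule monic_prod_list, auto)
  then have "(\<Prod>e\<leftarrow> ls. [:- e, 1:]) \<noteq> 0" by auto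
  then have "Polynomial.degree ([:- a, 1:] * (\<Prod>e\<leftarrow> ls. [:- e, 1:]))
     = Polynomial.degree [:- a, 1:] + Polynomial.degree (\<Prod>e\<leftarrow> ls. [:- e, 1:])"
    by (intro degree_mult_eq) auto
  then show ?case using Cons by simp
qed simp


theorem theorem2:
  fixes n :: nat and E :: "(nat \<times> nat) list" and lam :: "real list"
  assumes "n \<ge> 1"
    and "quiver n E"
    and "no_multiple_connections n E"
    and "eigenvalue_list (kirchhoff_matrix n E) lam"
  shows "\<forall>k \<in> {1..n}. lam ! (k - 1) \<ge> real (sorted_degrees n E ! (k - 1)) - real (n - k)"
proof
  fix k assume k: "k \<in> {1..n}"
  define K where "K = kirchhoff_matrix n E"
  have K: "K \<in> carrier_mat n n" unfolding K_def by (rule kirchhoff_carrier)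
  have KT: "transpose_mat K = K" unfolding K_def by (rule kirchhoff_sym)
  from assms(4) have sl: "sorted lam" and cpK: "char_poly K = (\<Prod>a\<leftarrow>lam. [:-a,1:])"
    unfolding eigenvalue_list_def K_def by auto
  have len: "length lam = n" using degree_monic_char_poly[OF K] cpK degree_prod_linear[of lam] by simp
  from real_schur[OF K cpK] obtain P where P: "P \<in> carrier_mat n n"
    and PTP: "transpose_mat P * P = 1\<^sub>m n"
    and ut: "upper_triangular (transpose_mat P * K * P)"
    and dg: "diag_mat (transpose_mat P * K * P) = lam" by blast
  define D where "D = transpose_mat P * K * P"
  have PT: "transpose_mat P \<in> carrier_mat n n" using P by auto
  have D: "D \<in> carrier_mat n n" unfolding D_def using P K by auto
  have DT: "transpose_mat D = D"
  proof -
    have "transpose_mat D = transpose_mat P * transpose_mat (transpose_mat P * K)"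
      unfolding D_def using P K PT by (simp add: transpose_mult[of _ n n _ n])
    also have "\<dots> = transpose_mat P * (K * P)"
      using P K PT KT by (simp add: transpose_mult[of _ n n _ n])
    also have "\<dots> = D" unfolding D_def using P K PT by simp
    finally show ?thesis .
  qed
  have Doff: "D $$ (i,j) = 0" if "i < n" "j < n" "i \<noteq> j" for i j
  proof (cases "j < i")
    case True
    then show ?thesis using ut that D unfolding D_def[symmetric] upper_triangular_def by auto
  next
    case False
    then have "i < j" using that by auto
    then have "D $$ (j,i) = 0" using ut that D unfolding D_def[symmetric] upper_triangular_def by auto
    then show ?thesis using arg_cong[OF DT, of "\<lambda>M. M $$ (i,j)"] that D by auto
  qed
  have Ddiag: "D $$ (i,i) = lam ! i" if "i < n" for i
    using arg_cong[OF dg, of "\<lambda>l. l ! i"] that D unfolding D_def[symmetric] diag_mat_def by auto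
  define v where "v = sorted_degrees n E ! (k-1)"
  have "n - k + 1 \<le> card {i\<in>{0..<n}. v \<le> degree E (i+1)}"
    unfolding v_def using k by (intro sorted_degrees_count) auto
  then obtain T where T: "T \<subseteq> {i\<in>{0..<n}. v \<le> degree E (i+1)}" and cT: "card T = n - k + 1"
    and fT: "finite T" by (rule obtain_subset_with_card_n)
  have T0: "T \<subseteq> {0..<n}" and Tdeg: "\<forall>i\<in>T. v \<le> degree E (i+1)" using T by auto
  define Tc where "Tc = {0..<n} - T"
  have cTc: "card Tc = k - 1" unfolding Tc_def using T0 cT k
    by (subst card_Diff_subset) (auto intro: finite_subset)
  obtain f where f: "bij_betw f {0..<k-1} Tc"
    using ex_bij_betw_nat_finite[of Tc] cTc unfolding Tc_def by auto
  define N where "N = mat\<^sub>r k k (\<lambda>r. if r = k-1 then 0\<^sub>v k else vec k (\<lambda>i. P $$ (f r, i)))"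
  have N: "N \<in> carrier_mat k k" unfolding N_def by auto
  have "det N = 0" unfolding N_def using k by (intro det_row_0) auto
  then obtain z where z: "z \<in> carrier_vec k" "z \<noteq> 0\<^sub>v k" "N *\<^sub>v z = 0\<^sub>v k"
    using det_0_iff_vec_prod_zero_field[OF N] by auto
  define y where "y = vec n (\<lambda>i. if i < k then z $ i else 0)"
  have y: "y \<in> carrier_vec n" unfolding y_def by auto
  define x where "x = P *\<^sub>v y"
  have x: "x \<in> carrier_vec n" unfolding x_def using P y by auto
  have x0: "\<forall>j<n. j \<notin> T \<longrightarrow> x $ j = 0"
  proof (intro allI impI)
    fix j assume j: "j < n" "j \<notin> T"
    then have "j \<in> Tc" unfolding Tc_def by auto
    then obtain r where r: "r < k - 1" "f r = j" using f unfolding bij_betw_def by auto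
    have "x $ j = (\<Sum>i\<in>{0..<n}. P $$ (j,i) * y $ i)"
      unfolding x_def using P y j by (simp add: scalar_prod_def row_def)
    also have "\<dots> = (\<Sum>i\<in>{0..<k}. P $$ (j,i) * z $ i)"
      unfolding y_def using k by (intro sum.mono_neutral_cong_right) auto
    also have "\<dots> = (N *\<^sub>v z) $ r"
      unfolding N_def using r z k by (simp add: scalar_prod_def)
    also have "\<dots> = 0" using z r k by simp
    finally show "x $ j = 0" .
  qed
  have qb: "x \<bullet> (K *\<^sub>v x) \<ge> (real v - real (card T - 1)) * (x \<bullet> x)"
    unfolding K_def by (rule quad_bound[OF assms(3) T0 Tdeg x x0])
  have Py: "P *\<^sub>v y \<in> carrier_vec n" using P y by auto
  have xx: "x \<bullet> x = y \<bullet> y"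
  proof -
    have "x \<bullet> x = (transpose_mat P *\<^sub>v x) \<bullet> y"
      unfolding x_def by (rule transpose_vec_mult_scalar[OF P y Py, symmetric])
    also have "transpose_mat P *\<^sub>v x = y" unfolding x_def
      using P PT y PTP by (simp flip: assoc_mult_mat_vec[of _ n n _ n])
    finally show ?thesis .
  qed
  have xKx: "x \<bullet> (K *\<^sub>v x) = y \<bullet> (D *\<^sub>v y)"
  proof -
    have Kx: "K *\<^sub>v x \<in> carrier_vec n" using K x by auto
    have "x \<bullet> (K *\<^sub>v x) = (K *\<^sub>v x) \<bullet> x" by (rule comm_scalar_prod[OF x Kx])
    also have "\<dots> = (transpose_mat P *\<^sub>v (K *\<^sub>v x)) \<bullet> y"
      unfolding x_def by (rule transpose_vec_mult_scalar[OF P y, symmetric]) (use K Py in auto)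
    also have "transpose_mat P *\<^sub>v (K *\<^sub>v x) = D *\<^sub>v y" unfolding x_def D_def
      using P PT K y by (simp add: assoc_mult_mat_vec[of _ n n _ n])
    also have "(D *\<^sub>v y) \<bullet> y = y \<bullet> (D *\<^sub>v y)" using D y by (intro comm_scalar_prod) auto
    finally show ?thesis .
  qed
  have yDy: "y \<bullet> (D *\<^sub>v y) = (\<Sum>i\<in>{0..<n}. lam ! i * (y $ i * y $ i))"
  proof -
    have "y \<bullet> (D *\<^sub>v y) = (\<Sum>i\<in>{0..<n}. \<Sum>j\<in>{0..<n}. y$i * D$$(i,j) * y$j)"
      by (rule quad_form[OF D y])
    also have "\<dots> = (\<Sum>i\<in>{0..<n}. \<Sum>j\<in>{0..<n}. if j = i then lam ! i * (y $ i * y $ i) else 0)"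
      by (intro sum.cong refl) (auto simp: Doff Ddiag)
    also have "\<dots> = (\<Sum>i\<in>{0..<n}. lam ! i * (y $ i * y $ i))" by simp
    finally show ?thesis .
  qed
  have yy: "y \<bullet> y = (\<Sum>i\<in>{0..<n}. y $ i * y $ i)" using y by (simp add: scalar_prod_def)
  have le: "(\<Sum>i\<in>{0..<n}. lam ! i * (y $ i * y $ i)) \<le> (\<Sum>i\<in>{0..<n}. lam ! (k-1) * (y $ i * y $ i))"
  proof (rule sum_mono)
    fix i assume i: "i \<in> {0..<n}"
    show "lam ! i * (y $ i * y $ i) \<le> lam ! (k-1) * (y $ i * y $ i)"
    proof (cases "i < k")
      case True
      then have "lam ! i \<le> lam ! (k-1)" using sl len k by (intro sorted_nth_mono) auto
      then show ?thesis by (intro mult_right_mono) auto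
    next
      case False
      then show ?thesis unfolding y_def using i by simp
    qed
  qed
  have ypos: "y \<bullet> y > 0"
  proof -
    obtain i where i: "i < k" "z $ i \<noteq> 0" using z by (metis carrier_vecD eq_vecI index_zero_vec(1,2))
    have "y $ i * y $ i > 0" unfolding y_def using i k by (auto simp: zero_less_mult_iff)
    moreover have "(\<Sum>j\<in>{0..<n}. y $ j * y $ j) \<ge> y $ i * y $ i"
      by (rule member_le_sum) (use i k in auto)
    ultimately show ?thesis unfolding yy by linarith
  qed
  have "(real v - real (card T - 1)) * (y \<bullet> y) \<le> lam ! (k-1) * (y \<bullet> y)"
    using qb xx xKx yDy le yy by (simp add: sum_distrib_left)
  then have "real v - real (card T - 1) \<le> lam ! (k-1)" using ypos by simp
  moreover have "card T - 1 = n - k" using cT by simp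
  ultimately show "lam ! (k - 1) \<ge> real (sorted_degrees n E ! (k - 1)) - real (n - k)"
    unfolding v_def by simp
qed

end
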